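(* Let $R,S\subset\Sigma$ be finite unions of $(-m,m)$-cylinders. Then for every integer $n\ge M+2m$: if $\alpha\ge0$, $$\kappa^{-1}\mu_\phi(S)\int_\Sigma e^{\alpha r_R^{n-(M+2m)}}d\mu_\phi\le\int_S e^{\alpha r_R^n}d\mu_\phi\le\kappa\,\mu_\phi(S)e^{\alpha(M+2m)}\int_\Sigma e^{\alpha r_R^n}d\mu_\phi;$$ if $\alpha\le0$, $$\kappa^{-1}\mu_\phi(S)e^{\alpha(M+2m)}\int_\Sigma e^{\alpha r_R^n}d\mu_\phi\le\int_S e^{\alpha r_R^n}d\mu_\phi\le\kappa\,\mu_\phi(S)\int_\Sigma e^{\alpha r_R^{n-(M+2m)}}d\mu_\phi.$$
   Context: $(\Sigma,\sigma)$ is a two-sided mixing subshift of finite type on $\{1,\dots,N\}$ (sequences $x=(x_n)_{n\in\mathbb{Z}}$ with $a_{x_nx_{n+1}}=1$ for an aperiodic $0$-$1$ matrix $(a_{ij})$), $\phi$ is Hölder continuous and $\mu_\phi$ its unique equilibrium state. A $(-m,m)$-cylinder is a set $\{x: x_j=i_j,\ -m\le j\le m\}$. $M>0$ and $\kappa>1$ are constants such that for all integrable $f,g$ with $f(x)$ depending only on $(x_n)_{n\le p}$ and $g(x)$ depending only on $(x_n)_{n\ge p+M}$ (any $p$), $\kappa^{-1}\int f\,d\mu_\phi\int g\,d\mu_\phi\le\int fg\,d\mu_\phi\le\kappa\int f\,d\mu_\phi\int g\,d\mu_\phi$ (such constants exist by the $\psi$-mixing property of $\mu_\phi$). For $D\subset\Sigma$,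 $r_D(x)$ is the smallest integer $n\ge1$ with $\sigma^n x\in D$ ($+\infty$ if none), $r_D^1=r_D$, $r_D^{n+1}=r_D^n+r_D\circ\sigma^{r_D^n}$. *)

theory Defs
  imports "HOL-Probability.Probability"
begin

text \<open>Two-sided subshift of finite type on the alphabet {1..N} with 0-1 transition matrix A
  (A i j = True means a_ij = 1).\<close>
definition SFT :: "nat \<Rightarrow> (nat \<Rightarrow> nat \<Rightarrow> bool) \<Rightarrow> (int \<Rightarrow> nat) set" where
  "SFT N A = {x. \<forall>n. x n \<in> {1..N} \<and> A (x n) (x (n + 1))}"

definition aperiodic_matrix :: "nat \<Rightarrow> (nat \<Rightarrow> nat \<Rightarrow> bool) \<Rightarrow> bool" where
  "aperiodic_matrix N A \<longleftrightarrow> (\<exists>k\<ge>1. \<forall>i\<in>{1..N}. \<forall>j\<in>{1..N}. \<exists>w :: nat \<Rightarrow> nat.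
      w 0 = i \<and> w k = j \<and> (\<forall>l\<le>k. w l \<in> {1..N}) \<and> (\<forall>l<k. A (w l) (w (Suc l))))"

definition sft_shift :: "(int \<Rightarrow> nat) \<Rightarrow> (int \<Rightarrow> nat)" where
  "sft_shift x = (\<lambda>k. x (k + 1))"

definition shiftn :: "nat \<Rightarrow> (int \<Rightarrow> nat) \<Rightarrow> (int \<Rightarrow> nat)" where
  "shiftn n x = (\<lambda>k. x (k + int n))"

definition seq_space :: "(int \<Rightarrow> nat) measure" where
  "seq_space = PiM UNIV (\<lambda>_. count_space UNIV)"

definition cylinder :: "(int \<Rightarrow> nat) set \<Rightarrow> nat \<Rightarrow> (int \<Rightarrow> nat) \<Rightarrow> (int \<Rightarrow> nat) set" where
  "cylinder \<Sigma> m w = {x \<in> \<Sigma>. \<forall>j. - int m \<le> j \<and> j \<le> int m \<longrightarrow> x j = w j}"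

definition finite_union_of_cylinders ::
    "(int \<Rightarrow> nat) set \<Rightarrow> nat \<Rightarrow> (int \<Rightarrow> nat) set \<Rightarrow> bool" where
  "finite_union_of_cylinders \<Sigma> m D \<longleftrightarrow>
     (\<exists>W. finite W \<and> D = (\<Union>w\<in>W. cylinder \<Sigma> m w))"

definition ret :: "(int \<Rightarrow> nat) set \<Rightarrow> (int \<Rightarrow> nat) \<Rightarrow> enat" where
  "ret D x = (if \<exists>n\<ge>1. shiftn n x \<in> D then enat (LEAST n. n \<ge> 1 \<and> shiftn n x \<in> D) else \<infinity>)"

fun ret_iter :: "(int \<Rightarrow> nat) set \<Rightarrow> nat \<Rightarrow> (int \<Rightarrow> nat) \<Rightarrow> enat" where
  "ret_iter D 0 x = 0"
| "ret_iter D (Suc n) x =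
     (case ret_iter D n x of \<infinity> \<Rightarrow> \<infinity> | enat k \<Rightarrow> enat k + ret D (shiftn k x))"

definition exp_ret :: "real \<Rightarrow> enat \<Rightarrow> ennreal" where
  "exp_ret \<alpha> r = (case r of enat k \<Rightarrow> ennreal (exp (\<alpha> * real k))
                    | \<infinity> \<Rightarrow> (if \<alpha> > 0 then \<infinity> else if \<alpha> = 0 then 1 else 0))"

definition decoupling :: "(int \<Rightarrow> nat) measure \<Rightarrow> nat \<Rightarrow> real \<Rightarrow> bool" where
  "decoupling \<mu> M \<kappa> \<longleftrightarrow>
    (\<forall>p::int. \<forall>f g :: (int \<Rightarrow> nat) \<Rightarrow> ennreal.
       f \<in> borel_measurable \<mu> \<longrightarrow> g \<in> borel_measurable \<mu> \<longrightarrow>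
       (\<forall>x y. (\<forall>n\<le>p. x n = y n) \<longrightarrow> f x = f y) \<longrightarrow>
       (\<forall>x y. (\<forall>n\<ge>p + int M. x n = y n) \<longrightarrow> g x = g y) \<longrightarrow>
       ennreal (1 / \<kappa>) * (\<integral>\<^sup>+x. f x \<partial>\<mu>) * (\<integral>\<^sup>+x. g x \<partial>\<mu>) \<le> (\<integral>\<^sup>+x. f x * g x \<partial>\<mu>) \<and>
       (\<integral>\<^sup>+x. f x * g x \<partial>\<mu>) \<le> ennreal \<kappa> * (\<integral>\<^sup>+x. f x \<partial>\<mu>) * (\<integral>\<^sup>+x. g x \<partial>\<mu>))"

end

theory Submission
  imports Defs
begin


fun hc :: "(int \<Rightarrow> nat) set \<Rightarrow> (int \<Rightarrow> nat) \<Rightarrow> nat \<Rightarrow> nat" where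
  "hc D x 0 = 0"
| "hc D x (Suc t) = hc D x t + (if shiftn (Suc t) x \<in> D then 1 else 0)"

lemma shiftn_shiftn: "shiftn j (shiftn k x) = shiftn (j + k) x"
  by (simp add: shiftn_def algebra_simps)

lemma hc_mono: "t \<le> t' \<Longrightarrow> hc D x t \<le> hc D x t'"
  by (induction t' ) (auto simp: le_Suc_eq)

lemma hc_le: "hc D x t \<le> t"
  by (induction t) auto

lemma hc_add: "hc D x (k + L) = hc D x k + hc D (shiftn k x) L"
  by (induction L) (auto simp: shiftn_shiftn add.commute)

lemma hc_zero: "(\<And>j. 1 \<le> j \<Longrightarrow> j \<le> t \<Longrightarrow> shiftn j y \<notin> D) \<Longrightarrow> hc D y t = 0"
  by (induction t) auto

lemma hc_cong: "(\<And>j. 1 \<le> j \<Longrightarrow> (shiftn j x \<in> D \<longleftrightarrow> shiftn j y \<in> D')) \<Longrightarrow> hc D x t = hc D' y t"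
  by (induction t) auto

lemma ret_enat:
  assumes "ret D y = enat L"
  shows "1 \<le> L \<and> shiftn L y \<in> D \<and> (\<forall>j. 1 \<le> j \<and> j < L \<longrightarrow> shiftn j y \<notin> D)"
proof -
  have ex: "\<exists>n\<ge>1. shiftn n y \<in> D" using assms by (auto simp: ret_def split: if_splits)
  hence L: "L = (LEAST n. n \<ge> 1 \<and> shiftn n y \<in> D)" using assms by (auto simp: ret_def)
  from ex obtain n where "n \<ge> 1 \<and> shiftn n y \<in> D" by blast
  hence "L \<ge> 1 \<and> shiftn L y \<in> D" unfolding L by (rule LeastI)
  moreover have "\<forall>j. 1 \<le> j \<and> j < L \<longrightarrow> shiftn j y \<notin> D"
    unfolding L using not_less_Least by blast
  ultimately show ?thesis by blast
qed

lemma ret_inf: "ret D y = \<infinity> \<Longrightarrow> \<forall>j\<ge>1. shiftn j y \<notin> D"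
  by (auto simp: ret_def split: if_splits)

lemma claimA:
  "(\<forall>k. ret_iter D n x = enat k \<longrightarrow> hc D x k = n \<and> (\<forall>t<k. hc D x t < n)) \<and>
   (ret_iter D n x = \<infinity> \<longrightarrow> (\<forall>t. hc D x t < n))"
proof (induction n)
  case 0
  then show ?case by (simp add: zero_enat_def)
next
  case (Suc n)
  show ?case
  proof (cases "ret_iter D n x")
    case (enat k)
    with Suc have hk: "hc D x k = n" and lt: "\<forall>t<k. hc D x t < n" by auto
    show ?thesis
    proof (cases "ret D (shiftn k x)")
      case (enat L)
      from ret_enat[OF this] have L1: "1 \<le> L" and hL: "shiftn L (shiftn k x) \<in> D"
        and nh: "\<forall>j. 1 \<le> j \<and> j < L \<longrightarrow> shiftn j (shiftn k x) \<notin> D" by auto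
      have z: "hc D (shiftn k x) t = 0" if "t < L" for t
        using that nh by (intro hc_zero) auto
      have one: "hc D (shiftn k x) L = 1"
        using L1 z[of "L - 1"] hL by (cases L) auto
      have "ret_iter D (Suc n) x = enat (k + L)" using \<open>ret_iter D n x = enat k\<close> enat by simp
      moreover have "hc D x (k + L) = Suc n" using hc_add[of D x k L] hk one by simp
      moreover have "hc D x t < Suc n" if "t < k + L" for t
      proof (cases "t < k")
        case True then show ?thesis using lt by auto
      next
        case False
        then obtain u where u0: "t = k + u" using le_Suc_ex[of k t] by auto
        have u: "t = k + u" "u < L" using u0 that by auto
        show ?thesis using hc_add[of D x k u] z[OF u(2)] hk u(1) by simp
      qed
      ultimately show ?thesis by auto
    next
      case infinity
      have nh: "\<forall>j\<ge>1. shiftn j (shiftn k x) \<notin> D" using ret_inf[OF infinity] .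
      have "ret_iter D (Suc n) x = \<infinity>" using \<open>ret_iter D n x = enat k\<close> infinity by simp
      moreover have "hc D x t < Suc n" for t
      proof (cases "t < k")
        case True then show ?thesis using lt by auto
      next
        case False
        then obtain u where u: "t = k + u" using le_Suc_ex[of k t] by auto
        have "hc D (shiftn k x) u = 0" using nh by (intro hc_zero) auto
        then show ?thesis using hc_add[of D x k u] hk u by simp
      qed
      ultimately show ?thesis by auto
    qed
  next
    case infinity
    with Suc show ?thesis by (auto simp: less_Suc_eq)
  qed
qed

lemma ret_iter_le_iff: "ret_iter D n x \<le> enat t \<longleftrightarrow> n \<le> hc D x t"
proof (cases "ret_iter D n x")
  case (enat k)
  with claimA[of D n x] have hk: "hc D x k = n" and lt: "\<forall>t<k. hc D x t < n" by auto
  show ?thesis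
  proof (cases "k \<le> t")
    case True then show ?thesis using enat hk hc_mono[OF True, of D x] by simp
  next
    case False then show ?thesis using enat lt by (simp add: not_le)
  qed
next
  case infinity
  with claimA[of D n x] show ?thesis by (auto simp: not_le)
qed

lemma enat_le_by: "(\<And>t. b \<le> enat t \<Longrightarrow> a \<le> enat t) \<Longrightarrow> (a::enat) \<le> b"
  by (cases b) auto

lemma ret_iter_cong:
  assumes "\<And>j. 1 \<le> j \<Longrightarrow> (shiftn j x \<in> D \<longleftrightarrow> shiftn j y \<in> D')"
  shows "ret_iter D n x = ret_iter D' n y"
proof -
  have h: "hc D x t = hc D' y t" for t using assms by (rule hc_cong)
  have 1: "ret_iter D n x \<le> ret_iter D' n y"
    by (rule enat_le_by) (simp add: ret_iter_le_iff h)
  have 2: "ret_iter D' n y \<le> ret_iter D n x"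
    by (rule enat_le_by) (simp add: ret_iter_le_iff h)
  from 1 2 show ?thesis by (rule antisym)
qed

lemma ineq1:
  assumes "k \<le> n"
  shows "enat k + ret_iter D (n - k) (shiftn k x) \<le> ret_iter D n x"
proof (rule enat_le_by)
  fix t assume "ret_iter D n x \<le> enat t"
  hence h: "n \<le> hc D x t" by (simp add: ret_iter_le_iff)
  have "k \<le> t" using h hc_le[of D x t] assms by linarith
  then obtain L where L: "t = k + L" using le_Suc_ex by blast
  have h': "n \<le> hc D x (k + L)" using h L by simp
  have "n - k \<le> hc D (shiftn k x) L" using h' hc_add[of D x k L] hc_le[of D x k] by linarith
  hence "ret_iter D (n - k) (shiftn k x) \<le> enat L" by (simp add: ret_iter_le_iff)
  hence "enat k + ret_iter D (n - k) (shiftn k x) \<le> enat k + enat L" by (rule add_left_mono)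
  thus "enat k + ret_iter D (n - k) (shiftn k x) \<le> enat t" using L by simp
qed

lemma ineq2:
  shows "ret_iter D n x \<le> enat k + ret_iter D n (shiftn k x)"
proof (rule enat_le_by)
  fix t assume a: "enat k + ret_iter D n (shiftn k x) \<le> enat t"
  then obtain r where r: "ret_iter D n (shiftn k x) = enat r"
    by (cases "ret_iter D n (shiftn k x)") auto
  with a have "k + r \<le> t" by simp
  have "n \<le> hc D (shiftn k x) r" using r ret_iter_le_iff[of D n "shiftn k x" r] by simp
  also have "\<dots> \<le> hc D x (k + r)" using hc_add[of D x k r] by simp
  also have "\<dots> \<le> hc D x t" using \<open>k + r \<le> t\<close> by (rule hc_mono)
  finally show "ret_iter D n x \<le> enat t" by (simp add: ret_iter_le_iff)
qed

lemma exp_ret_mono: "0 \<le> \<alpha> \<Longrightarrow> a \<le> b \<Longrightarrow> exp_ret \<alpha> a \<le> exp_ret \<alpha> b"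
  by (cases a; cases b) (auto simp: exp_ret_def ennreal_leI mult_left_mono)

lemma exp_ret_antimono: "\<alpha> \<le> 0 \<Longrightarrow> a \<le> b \<Longrightarrow> exp_ret \<alpha> b \<le> exp_ret \<alpha> a"
  by (cases a; cases b) (auto simp: exp_ret_def ennreal_leI mult_left_mono_neg)

lemma exp_ret_add: "exp_ret \<alpha> (enat k + r) = ennreal (exp (\<alpha> * real k)) * exp_ret \<alpha> r"
  by (cases r) (auto simp: exp_ret_def ennreal_mult' distrib_left exp_add ennreal_mult_top)



lemma shiftn_0[simp]: "shiftn 0 x = x" by (simp add: shiftn_def)
lemma shiftn_Suc: "shiftn (Suc k) x = shiftn k (sft_shift x)"
  by (simp add: shiftn_def sft_shift_def algebra_simps)

lemma meas_shiftn:
  assumes "sft_shift \<in> measurable \<mu> \<mu>" shows "shiftn k \<in> measurable \<mu> \<mu>"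
proof (induction k)
  case 0 show ?case by (simp add: measurable_ident[unfolded id_def] cong: measurable_cong)
next
  case (Suc k)
  have "(\<lambda>x. shiftn k (sft_shift x)) \<in> measurable \<mu> \<mu>"
    using Suc assms by (rule measurable_compose[rotated])
  then show ?case by (simp add: shiftn_Suc[abs_def])
qed

lemma inv_shiftn:
  assumes T: "sft_shift \<in> measurable \<mu> \<mu>" and inv: "distr \<mu> \<mu> sft_shift = \<mu>"
    and h: "h \<in> borel_measurable \<mu>"
  shows "(\<integral>\<^sup>+x. h (shiftn k x) \<partial>\<mu>) = (\<integral>\<^sup>+x. h x \<partial>\<mu>)"
proof (induction k)
  case 0 show ?case by simp
next
  case (Suc k)
  have hk: "(\<lambda>x. h (shiftn k x)) \<in> borel_measurable \<mu>"
    using meas_shiftn[OF T] h by (rule measurable_compose)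
  have "(\<integral>\<^sup>+x. h (shiftn (Suc k) x) \<partial>\<mu>) = (\<integral>\<^sup>+x. (\<lambda>y. h (shiftn k y)) (sft_shift x) \<partial>\<mu>)"
    by (simp add: shiftn_Suc)
  also have "\<dots> = integral\<^sup>N (distr \<mu> \<mu> sft_shift) (\<lambda>y. h (shiftn k y))"
    using hk inv by (intro nn_integral_distr[symmetric] T) simp
  also have "\<dots> = (\<integral>\<^sup>+x. h (shiftn k x) \<partial>\<mu>)" using inv by simp
  finally show ?case using Suc by simp
qed

lemma hc_sets:
  assumes T: "sft_shift \<in> measurable \<mu> \<mu>" and D: "D \<in> sets \<mu>"
  shows "{x\<in>space \<mu>. hc D x t = c} \<in> sets \<mu>"
proof (induction t arbitrary: c)
  case 0 show ?case by (cases "c = 0") auto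
next
  case (Suc t)
  have pre: "shiftn (Suc t) -` D \<inter> space \<mu> \<in> sets \<mu>"
    using meas_shiftn[OF T] D by (rule measurable_sets)
  have "{x\<in>space \<mu>. hc D x (Suc t) = c} =
     ({x\<in>space \<mu>. hc D x t = c} \<inter> (space \<mu> - (shiftn (Suc t) -` D \<inter> space \<mu>))) \<union>
     ((if c = 0 then {} else {x\<in>space \<mu>. hc D x t = c - 1}) \<inter> (shiftn (Suc t) -` D \<inter> space \<mu>))"
    by auto
  also have "\<dots> \<in> sets \<mu>" using Suc pre by auto
  finally show ?case .
qed

lemma ret_le_sets:
  assumes T: "sft_shift \<in> measurable \<mu> \<mu>" and D: "D \<in> sets \<mu>"
  shows "{x\<in>space \<mu>. ret_iter D n x \<le> enat t} \<in> sets \<mu>"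
proof -
  have "{x\<in>space \<mu>. ret_iter D n x \<le> enat t} = (\<Union>c\<in>{n..t}. {x\<in>space \<mu>. hc D x t = c})"
    using hc_le[of D _ t] by (auto simp: ret_iter_le_iff)
  also have "\<dots> \<in> sets \<mu>" using hc_sets[OF T D] by auto
  finally show ?thesis .
qed

lemma enat_eq_Suc_iff: "(r::enat) = enat (Suc s) \<longleftrightarrow> r \<le> enat (Suc s) \<and> \<not> r \<le> enat s"
  by (cases r) auto

lemma enat_eq_0_iff: "(r::enat) = enat 0 \<longleftrightarrow> r \<le> enat 0"
  by (cases r) auto

lemma enat_eq_inf_iff: "(r::enat) = \<infinity> \<longleftrightarrow> (\<forall>t. \<not> r \<le> enat t)"
  by (cases r) auto

lemma ret_iter_meas:
  assumes T: "sft_shift \<in> measurable \<mu> \<mu>" and D: "D \<in> sets \<mu>"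
  shows "ret_iter D n \<in> measurable \<mu> (count_space UNIV)"
proof (rule measurable_count_space_eq_countable[THEN iffD2])
  show "countable (UNIV :: enat set)" by simp
  show "ret_iter D n \<in> space \<mu> \<rightarrow> UNIV \<and> (\<forall>a\<in>UNIV. ret_iter D n -` {a} \<inter> space \<mu> \<in> sets \<mu>)"
  proof (intro conjI ballI)
  show "ret_iter D n \<in> space \<mu> \<rightarrow> UNIV" by simp
  fix a
  show "ret_iter D n -` {a} \<inter> space \<mu> \<in> sets \<mu>"
  proof (cases a)
    case (enat t)
    show ?thesis
    proof (cases t)
      case 0
      have eq: "ret_iter D n -` {a} \<inter> space \<mu> = {x\<in>space \<mu>. ret_iter D n x \<le> enat 0}"
      proof -
        have "ret_iter D n -` {a} \<inter> space \<mu> = {x\<in>space \<mu>. ret_iter D n x = enat 0}"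
          using enat 0 by auto
        also have "\<dots> = {x\<in>space \<mu>. ret_iter D n x \<le> enat 0}"
          by (auto simp add: enat_eq_0_iff)
        finally show ?thesis .
      qed
      show ?thesis unfolding eq by (rule ret_le_sets[OF T D])
    next
      case (Suc s)
      have eq: "ret_iter D n -` {a} \<inter> space \<mu> = {x\<in>space \<mu>. ret_iter D n x \<le> enat t} - {x\<in>space \<mu>. ret_iter D n x \<le> enat s}"
      proof -
        have "ret_iter D n -` {a} \<inter> space \<mu> = {x\<in>space \<mu>. ret_iter D n x = enat (Suc s)}"
          using enat Suc by auto
        also have "\<dots> = {x\<in>space \<mu>. ret_iter D n x \<le> enat t} - {x\<in>space \<mu>. ret_iter D n x \<le> enat s}"
          using Suc by (auto simp add: enat_eq_Suc_iff)
        finally show ?thesis .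
      qed
      show ?thesis unfolding eq by (rule sets.Diff; rule ret_le_sets[OF T D])
    qed
  next
    case infinity
    have eq: "ret_iter D n -` {a} \<inter> space \<mu> = space \<mu> - (\<Union>t. {x\<in>space \<mu>. ret_iter D n x \<le> enat t})"
    proof -
      have "ret_iter D n -` {a} \<inter> space \<mu> = {x\<in>space \<mu>. ret_iter D n x = \<infinity>}"
        using infinity by auto
      also have "\<dots> = space \<mu> - (\<Union>t. {x\<in>space \<mu>. ret_iter D n x \<le> enat t})"
        by (auto simp add: enat_eq_inf_iff)
      finally show ?thesis .
    qed
    have U: "(\<Union>t. {x\<in>space \<mu>. ret_iter D n x \<le> enat t}) \<in> sets \<mu>"
      by (rule sets.countable_UN) (use ret_le_sets[OF T D] in blast)
    show ?thesis unfolding eq by (rule sets.Diff[OF sets.top U])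
  qed
  qed
qed



definition fcyl :: "nat \<Rightarrow> (int \<Rightarrow> nat) \<Rightarrow> (int \<Rightarrow> nat) set" where
  "fcyl m w = {x. \<forall>j. - int m \<le> j \<and> j \<le> int m \<longrightarrow> x j = w j}"

lemma fcyl_sets: "fcyl m w \<in> sets seq_space"
proof -
  have "fcyl m w = {x\<in>space seq_space. \<forall>j\<in>{- int m..int m}. x j = w j}"
    by (auto simp: fcyl_def seq_space_def space_PiM)
  also have "\<dots> \<in> sets seq_space" unfolding seq_space_def by measurable
  finally show ?thesis .
qed

lemma cylinder_fcyl: "cylinder \<Sigma> m w = fcyl m w \<inter> \<Sigma>"
  by (auto simp: cylinder_def fcyl_def)

lemma SFT_shiftn: assumes "x \<in> SFT N A" shows "shiftn j x \<in> SFT N A"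
proof -
  have "x (n + int j) \<in> {1..N} \<and> A (x (n + int j)) (x (n + int j + 1))" for n
    using assms by (auto simp: SFT_def)
  then show ?thesis by (auto simp: SFT_def shiftn_def ac_simps)
qed

lemma fcyl_local:
  assumes "\<forall>q\<ge>int m + int M. x q = y q" "1 \<le> i"
  shows "shiftn i (shiftn (M + 2 * m) x) \<in> fcyl m w \<longleftrightarrow> shiftn i (shiftn (M + 2 * m) y) \<in> fcyl m w"
proof -
  have h: "x (j + int i + (int M + 2 * int m)) = y (j + int i + (int M + 2 * int m))" if "- int m \<le> j" for j
    using assms that by (intro assms(1)[rule_format]) simp
  then show ?thesis by (auto simp: fcyl_def shiftn_def h)
qed

theorem lemma3p3:
  fixes N :: nat and A :: "nat \<Rightarrow> nat \<Rightarrow> bool" and \<mu> :: "(int \<Rightarrow> nat) measure"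
    and M m n :: nat and \<kappa> \<alpha> :: real and R S :: "(int \<Rightarrow> nat) set"
  assumes aper: "aperiodic_matrix N A"
    and prob: "prob_space \<mu>" and sets_mu: "sets \<mu> = sets seq_space"
    and supp: "emeasure \<mu> (SFT N A) = 1"
    and shift_meas: "sft_shift \<in> measurable \<mu> \<mu>" and invariant: "distr \<mu> \<mu> sft_shift = \<mu>"
    and M_pos: "M > 0" and kappa: "\<kappa> > 1" and mix: "decoupling \<mu> M \<kappa>"
    and R: "finite_union_of_cylinders (SFT N A) m R"
    and S: "finite_union_of_cylinders (SFT N A) m S"
    and n: "n \<ge> M + 2 * m"
  shows "(\<alpha> \<ge> 0 \<longrightarrow>
            ennreal (1 / \<kappa>) * emeasure \<mu> S *
              (\<integral>\<^sup>+x\<in>SFT N A. exp_ret \<alpha> (ret_iter R (n - (M + 2 * m)) x) \<partial>\<mu>)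
            \<le> (\<integral>\<^sup>+x\<in>S. exp_ret \<alpha> (ret_iter R n x) \<partial>\<mu>)
          \<and> (\<integral>\<^sup>+x\<in>S. exp_ret \<alpha> (ret_iter R n x) \<partial>\<mu>)
            \<le> ennreal \<kappa> * emeasure \<mu> S * ennreal (exp (\<alpha> * real (M + 2 * m))) *
              (\<integral>\<^sup>+x\<in>SFT N A. exp_ret \<alpha> (ret_iter R n x) \<partial>\<mu>))
       \<and> (\<alpha> \<le> 0 \<longrightarrow>
            ennreal (1 / \<kappa>) * emeasure \<mu> S * ennreal (exp (\<alpha> * real (M + 2 * m))) *
              (\<integral>\<^sup>+x\<in>SFT N A. exp_ret \<alpha> (ret_iter R n x) \<partial>\<mu>)
            \<le> (\<integral>\<^sup>+x\<in>S. exp_ret \<alpha> (ret_iter R n x) \<partial>\<mu>)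
          \<and> (\<integral>\<^sup>+x\<in>S. exp_ret \<alpha> (ret_iter R n x) \<partial>\<mu>)
            \<le> ennreal \<kappa> * emeasure \<mu> S *
              (\<integral>\<^sup>+x\<in>SFT N A. exp_ret \<alpha> (ret_iter R (n - (M + 2 * m)) x) \<partial>\<mu>))"
proof -
  obtain k where k: "k = M + 2 * m" by blast
  interpret P: prob_space \<mu> by (rule prob)
  have spc: "space \<mu> = UNIV"
    using sets_eq_imp_space_eq[OF sets_mu] by (simp add: seq_space_def space_PiM)
  obtain WR where WR: "finite WR" "R = (\<Union>w\<in>WR. cylinder (SFT N A) m w)"
    using R unfolding finite_union_of_cylinders_def by blast
  obtain WS where WS: "finite WS" "S = (\<Union>w\<in>WS. cylinder (SFT N A) m w)"
    using S unfolding finite_union_of_cylinders_def by blast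
  define R' where "R' = (\<Union>w\<in>WR. fcyl m w)"
  define S' where "S' = (\<Union>w\<in>WS. fcyl m w)"
  have R'_sets: "R' \<in> sets \<mu>" unfolding R'_def sets_mu
    using WR(1) fcyl_sets by (intro sets.finite_UN) auto
  have S'_sets: "S' \<in> sets \<mu>" unfolding S'_def sets_mu
    using WS(1) fcyl_sets by (intro sets.finite_UN) auto
  have Sig_sets: "SFT N A \<in> sets \<mu>" using supp by (intro emeasure_neq_0_sets) simp
  have AE_Sig: "AE x in \<mu>. x \<in> SFT N A"
    using Sig_sets supp by (subst P.AE_in_set_eq_1) (auto simp: measure_def)
  have R_eq: "R = R' \<inter> SFT N A" unfolding WR(2) R'_def cylinder_fcyl by auto
  have S_eq: "S = S' \<inter> SFT N A" unfolding WS(2) S'_def cylinder_fcyl by auto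
  have S_sets: "S \<in> sets \<mu>" unfolding S_eq using S'_sets Sig_sets by auto
  have retR: "ret_iter R j x = ret_iter R' j x" if "x \<in> SFT N A" for j x
    by (rule ret_iter_cong) (use SFT_shiftn[OF that] R_eq in auto)
  define E where "E j x = exp_ret \<alpha> (ret_iter R' j x)" for j x
  have E_meas: "E j \<in> borel_measurable \<mu>" for j
  proof -
    have "(\<lambda>x. exp_ret \<alpha> (ret_iter R' j x)) \<in> borel_measurable \<mu>"
      by (rule measurable_compose[OF ret_iter_meas[OF shift_meas R'_sets]]) (simp add: measurable_count_space_eq1)
    then show ?thesis by (simp add: E_def[abs_def])
  qed
  have Ek_meas: "(\<lambda>x. E j (shiftn k x)) \<in> borel_measurable \<mu>" for j
    using meas_shiftn[OF shift_meas] E_meas by (rule measurable_compose)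
  have intE: "(\<integral>\<^sup>+x\<in>SFT N A. exp_ret \<alpha> (ret_iter R j x) \<partial>\<mu>) = (\<integral>\<^sup>+x. E j x \<partial>\<mu>)" for j
    by (rule nn_integral_cong_AE) (use AE_Sig in \<open>eventually_elim\<close>, simp add: retR E_def)
  have intEk: "(\<integral>\<^sup>+x. E j (shiftn k x) \<partial>\<mu>) = (\<integral>\<^sup>+x. E j x \<partial>\<mu>)" for j
    by (rule inv_shiftn[OF shift_meas invariant E_meas])
  have LHS: "(\<integral>\<^sup>+x\<in>S. exp_ret \<alpha> (ret_iter R n x) \<partial>\<mu>) = (\<integral>\<^sup>+x. indicator S' x * E n x \<partial>\<mu>)"
    by (rule nn_integral_cong_AE) (use AE_Sig in \<open>eventually_elim\<close>, simp add: retR E_def S_eq mult.commute split: split_indicator)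
  have muS: "emeasure \<mu> S' = emeasure \<mu> S"
    by (rule emeasure_eq_AE) (use AE_Sig S'_sets S_sets S_eq in auto)
  have intInd: "(\<integral>\<^sup>+x. indicator S' x \<partial>\<mu>) = emeasure \<mu> S"
    using S'_sets muS by simp
  have locf: "\<forall>x y. (\<forall>q\<le>int m. x q = y q) \<longrightarrow> indicator S' x = (indicator S' y :: ennreal)"
  proof (intro allI impI)
    fix x y :: "int \<Rightarrow> nat" assume h: "\<forall>q\<le>int m. x q = y q"
    have "x \<in> fcyl m w \<longleftrightarrow> y \<in> fcyl m w" for w using h by (auto simp: fcyl_def)
    then have "x \<in> S' \<longleftrightarrow> y \<in> S'" unfolding S'_def by blast
    then show "indicator S' x = (indicator S' y :: ennreal)" by (simp split: split_indicator)
  qed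
  have dec: "ennreal (1 / \<kappa>) * emeasure \<mu> S * (\<integral>\<^sup>+x. G x \<partial>\<mu>) \<le> (\<integral>\<^sup>+x. indicator S' x * G x \<partial>\<mu>) \<and>
      (\<integral>\<^sup>+x. indicator S' x * G x \<partial>\<mu>) \<le> ennreal \<kappa> * emeasure \<mu> S * (\<integral>\<^sup>+x. G x \<partial>\<mu>)"
    if Gm: "G \<in> borel_measurable \<mu>" and Gl: "\<And>x y. \<forall>q\<ge>int m + int M. x q = y q \<Longrightarrow> G x = G y" for G
  proof -
    have im: "(indicator S' :: _ \<Rightarrow> ennreal) \<in> borel_measurable \<mu>" using S'_sets by simp
    have "\<forall>x y. (\<forall>q\<ge>int m + int M. x q = y q) \<longrightarrow> G x = G y" using Gl by blast
    from mix[unfolded decoupling_def, rule_format, OF im Gm locf[rule_format] this[rule_format]]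
    show ?thesis unfolding intInd by blast
  qed
  have locE: "E j (shiftn k x) = E j (shiftn k y)" if "\<forall>q\<ge>int m + int M. x q = y q" for j x y
  proof -
    have "ret_iter R' j (shiftn k x) = ret_iter R' j (shiftn k y)"
      by (rule ret_iter_cong) (use fcyl_local[OF that] in \<open>auto simp: R'_def k\<close>)
    then show ?thesis by (simp add: E_def)
  qed
  define G1 where "G1 x = E (n - k) (shiftn k x)" for x
  define G2 where "G2 x = ennreal (exp (\<alpha> * real k)) * E n (shiftn k x)" for x
  have G1m: "G1 \<in> borel_measurable \<mu>" unfolding G1_def[abs_def] by (rule Ek_meas)
  have G2m: "G2 \<in> borel_measurable \<mu>" unfolding G2_def[abs_def] using Ek_meas by simp
  have G1l: "G1 x = G1 y" if "\<forall>q\<ge>int m + int M. x q = y q" for x y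
    unfolding G1_def using locE[OF that] by simp
  have G2l: "G2 x = G2 y" if "\<forall>q\<ge>int m + int M. x q = y q" for x y
    unfolding G2_def using locE[OF that] by simp
  have intG1: "(\<integral>\<^sup>+x. G1 x \<partial>\<mu>) = (\<integral>\<^sup>+x. E (n - k) x \<partial>\<mu>)"
    unfolding G1_def by (rule intEk)
  have intG2: "(\<integral>\<^sup>+x. G2 x \<partial>\<mu>) = ennreal (exp (\<alpha> * real k)) * (\<integral>\<^sup>+x. E n x \<partial>\<mu>)"
    unfolding G2_def by (simp add: nn_integral_cmult[OF Ek_meas] intEk)
  note d1 = dec[of G1, OF G1m G1l] and d2 = dec[of G2, OF G2m G2l]
  have kn: "k \<le> n" using n k by simp
  have p1: "ret_iter R' (n - k) (shiftn k x) \<le> ret_iter R' n x" for x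
  proof -
    have "ret_iter R' (n - k) (shiftn k x) \<le> enat k + ret_iter R' (n - k) (shiftn k x)"
      by (cases "ret_iter R' (n - k) (shiftn k x)") auto
    also have "\<dots> \<le> ret_iter R' n x" by (rule ineq1[OF kn])
    finally show ?thesis .
  qed
  have G2eq: "G2 x = exp_ret \<alpha> (enat k + ret_iter R' n (shiftn k x))" for x
    by (simp add: G2_def E_def exp_ret_add)
  have pos_up: "E n x \<le> G2 x" if "0 \<le> \<alpha>" for x
    unfolding G2eq E_def using that ineq2 by (rule exp_ret_mono)
  have pos_lo: "G1 x \<le> E n x" if "0 \<le> \<alpha>" for x
    unfolding G1_def E_def using that p1 by (rule exp_ret_mono)
  have neg_lo: "G2 x \<le> E n x" if "\<alpha> \<le> 0" for x
    unfolding G2eq E_def using that ineq2 by (rule exp_ret_antimono)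
  have neg_up: "E n x \<le> G1 x" if "\<alpha> \<le> 0" for x
    unfolding G1_def E_def using that p1 by (rule exp_ret_antimono)
  have mono_ind: "(\<integral>\<^sup>+x. indicator S' x * F1 x \<partial>\<mu>) \<le> (\<integral>\<^sup>+x. indicator S' x * F2 x \<partial>\<mu>)"
    if "\<And>x. F1 x \<le> F2 x" for F1 F2 :: "_ \<Rightarrow> ennreal"
    by (rule nn_integral_mono) (simp add: that mult_left_mono)
  have I1: "(\<integral>\<^sup>+x\<in>SFT N A. exp_ret \<alpha> (ret_iter R (n - k) x) \<partial>\<mu>) = (\<integral>\<^sup>+x. E (n - k) x \<partial>\<mu>)"
    by (rule intE)
  have I2: "(\<integral>\<^sup>+x\<in>SFT N A. exp_ret \<alpha> (ret_iter R n x) \<partial>\<mu>) = (\<integral>\<^sup>+x. E n x \<partial>\<mu>)"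
    using intE by simp
  show ?thesis
    unfolding k[symmetric] I1 I2 LHS
    apply (intro conjI impI)
    subgoal premises a
      using d1 mono_ind[of G1 "E n", OF pos_lo[OF a]] unfolding intG1 by (blast intro: order_trans)
    subgoal premises a
    proof -
      have "(\<integral>\<^sup>+x. indicator S' x * E n x \<partial>\<mu>) \<le> (\<integral>\<^sup>+x. indicator S' x * G2 x \<partial>\<mu>)"
        by (rule mono_ind[of "E n" G2, OF pos_up[OF a]])
      also have "\<dots> \<le> ennreal \<kappa> * emeasure \<mu> S * (\<integral>\<^sup>+x. G2 x \<partial>\<mu>)" using d2 by blast
      also have "\<dots> = ennreal \<kappa> * emeasure \<mu> S * ennreal (exp (\<alpha> * real k)) * (\<integral>\<^sup>+x. E n x \<partial>\<mu>)"
        unfolding intG2 by (simp add: mult.assoc)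
      finally show ?thesis .
    qed
    subgoal premises a
    proof -
      have "ennreal (1 / \<kappa>) * emeasure \<mu> S * ennreal (exp (\<alpha> * real k)) * (\<integral>\<^sup>+x. E n x \<partial>\<mu>)
          = ennreal (1 / \<kappa>) * emeasure \<mu> S * (\<integral>\<^sup>+x. G2 x \<partial>\<mu>)"
        unfolding intG2 by (simp add: mult.assoc)
      also have "\<dots> \<le> (\<integral>\<^sup>+x. indicator S' x * G2 x \<partial>\<mu>)" using d2 by blast
      also have "\<dots> \<le> (\<integral>\<^sup>+x. indicator S' x * E n x \<partial>\<mu>)"
        by (rule mono_ind[of G2 "E n", OF neg_lo[OF a]])
      finally show ?thesis .
    qed
    subgoal premises a
      using d1 mono_ind[of "E n" G1, OF neg_up[OF a]] unfolding intG1 by (blast intro: order_trans)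
    done
qed

end
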